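(* Let $S=S(\lambda_1,\ldots,\lambda_d)$ be a spider whose number of vertices $n=1+\lambda_1+\cdots+\lambda_d$ is even, and let $j$ be the number of legs of odd length (necessarily $j$ is odd). Then $$[e_{(2^{n/2})}]X_S=(-1)^{\frac{j-1}{2}}\cdot 2.$$
   Context: A spider $S(\lambda_1,\ldots,\lambda_d)$, for positive integers $\lambda_1,\ldots,\lambda_d$, is the tree consisting of a vertex $v$ (the center) together with $d$ vertex-disjoint paths (legs) having $\lambda_1,\ldots,\lambda_d$ vertices respectively, where $v$ is joined by an edge to one endpoint of each leg; the length of the $i$-th leg is $\lambda_i$. $(2^{k})$ is the partition with $k$ parts equal to $2$. The chromatic symmetric function of $G$ is $X_G=\sum_\kappa \prod_{v} x_{\kappa(v)}$ over proper colorings $\kappa$, and $[e_\mu]X_G$ denotes the coefficient of $e_\mu$ in the expansion of $X_G$ in elementary symmetric functions. *)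

theory Defs
  imports "HOL-Library.FuncSet"
begin

text \<open>A finite simple graph is given by a vertex set V and a symmetric irreflexive
adjacency relation E. Colours are natural numbers (variables x_0, x_1, ...).\<close>

definition proper_colorings :: "'a set \<Rightarrow> ('a \<Rightarrow> 'a \<Rightarrow> bool) \<Rightarrow> ('a \<Rightarrow> nat) set" where
  "proper_colorings V E =
     {\<kappa> \<in> V \<rightarrow>\<^sub>E (UNIV :: nat set). \<forall>v\<in>V. \<forall>w\<in>V. E v w \<longrightarrow> \<kappa> v \<noteq> \<kappa> w}"

text \<open>Coefficient of the monomial prod_i x_i^(alpha i) in X_G.\<close>
definition X_coeff :: "'a set \<Rightarrow> ('a \<Rightarrow> 'a \<Rightarrow> bool) \<Rightarrow> (nat \<Rightarrow> nat) \<Rightarrow> nat" where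
  "X_coeff V E \<alpha> = card {\<kappa> \<in> proper_colorings V E. \<forall>i. card {v \<in> V. \<kappa> v = i} = \<alpha> i}"

definition partitions :: "nat \<Rightarrow> nat list set" where
  "partitions n = {\<mu>. sorted_wrt (\<ge>) \<mu> \<and> (\<forall>x\<in>set \<mu>. 0 < x) \<and> sum_list \<mu> = n}"

text \<open>Coefficient of the monomial prod_i x_i^(alpha i) in
  e_mu = prod_r e_(mu_r): choose for each part r a set S r of mu_r distinct variables.\<close>
definition e_mono :: "nat list \<Rightarrow> (nat \<Rightarrow> nat) \<Rightarrow> nat" where
  "e_mono \<mu> \<alpha> = card {S :: nat \<Rightarrow> nat set.
      (\<forall>r < length \<mu>. finite (S r) \<and> card (S r) = \<mu> ! r) \<and>
      (\<forall>r. length \<mu> \<le> r \<longrightarrow> S r = {}) \<and>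
      (\<forall>i. card {r. r < length \<mu> \<and> i \<in> S r} = \<alpha> i)}"

text \<open>a is the family of coefficients of the e-expansion X_G = sum_mu a_mu e_mu
  (mu ranging over partitions of n = |V|).\<close>
definition e_expansion :: "'a set \<Rightarrow> ('a \<Rightarrow> 'a \<Rightarrow> bool) \<Rightarrow> (nat list \<Rightarrow> int) \<Rightarrow> bool" where
  "e_expansion V E a \<longleftrightarrow>
     (\<forall>\<mu>. \<mu> \<notin> partitions (card V) \<longrightarrow> a \<mu> = 0) \<and>
     (\<forall>\<alpha>. finite {i. \<alpha> i \<noteq> 0} \<longrightarrow>
        int (X_coeff V E \<alpha>) = (\<Sum>\<mu>\<in>partitions (card V). a \<mu> * int (e_mono \<mu> \<alpha>)))"

definition e_coeff :: "'a set \<Rightarrow> ('a \<Rightarrow> 'a \<Rightarrow> bool) \<Rightarrow> nat list \<Rightarrow> int" where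
  "e_coeff V E \<mu> = (THE a. e_expansion V E a) \<mu>"

text \<open>Spider S(lam_1,...,lam_d): centre (0,0); leg i (i < d) has vertices (i+1,t), 1 \<le> t \<le> lam_i;
  the centre is joined to (i+1,1), and (i+1,t) is joined to (i+1,t+1).\<close>
definition spider_V :: "nat list \<Rightarrow> (nat \<times> nat) set" where
  "spider_V lam = insert (0,0) {(Suc i, t) | i t. i < length lam \<and> 1 \<le> t \<and> t \<le> lam ! i}"

definition spider_adj :: "nat list \<Rightarrow> nat \<times> nat \<Rightarrow> nat \<times> nat \<Rightarrow> bool" where
  "spider_adj lam u v \<longleftrightarrow>
     (u = (0,0) \<and> (\<exists>i < length lam. v = (Suc i, 1))) \<or>
     (fst u = fst v \<and> 1 \<le> fst u \<and> snd v = Suc (snd u))"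

definition spider_E :: "nat list \<Rightarrow> nat \<times> nat \<Rightarrow> nat \<times> nat \<Rightarrow> bool" where
  "spider_E lam u v \<longleftrightarrow> u \<in> spider_V lam \<and> v \<in> spider_V lam \<and>
     (spider_adj lam u v \<or> spider_adj lam v u)"

end

theory Submission
  imports Defs "HOL-Combinatorics.Permutations"
begin


lemma downclosed_eq:
  fixes A :: "nat set"
  assumes "finite A" "\<And>x y. x \<in> A \<Longrightarrow> y \<le> x \<Longrightarrow> y \<in> A"
  shows "x \<in> A \<longleftrightarrow> x < card A"
proof (cases "A = {}")
  case True then show ?thesis by simp
next
  case False
  have m: "Max A \<in> A" using assms(1) False by simp
  have e: "A = {..Max A}" using assms m
    by (auto intro: Max_ge)
  have "card A = Suc (Max A)" by (subst e) simp
  then show ?thesis by (subst e) auto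
qed

lemma card_filter_sum:
  assumes "finite B"
  shows "card {r\<in>B. P r} = (\<Sum>r\<in>B. if P r then 1 else 0)"
  using assms by (simp add: sum.inter_filter[symmetric])

lemma count_swap:
  fixes A :: "'a set" and B :: "'b set"
  assumes "finite A" "finite B"
  shows "(\<Sum>i\<in>A. card {r\<in>B. P r i}) = (\<Sum>r\<in>B. card {i\<in>A. P r i})"
proof -
  have "(\<Sum>i\<in>A. card {r\<in>B. P r i}) = (\<Sum>i\<in>A. \<Sum>r\<in>B. if P r i then 1 else 0)"
    using assms by (simp add: card_filter_sum)
  also have "\<dots> = (\<Sum>r\<in>B. \<Sum>i\<in>A. if P r i then 1 else 0)" by (rule sum.swap)
  also have "\<dots> = (\<Sum>r\<in>B. card {i\<in>A. P r i})"
    using assms by (simp add: card_filter_sum)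
  finally show ?thesis .
qed


definition lead :: "nat list \<Rightarrow> nat \<Rightarrow> nat" where
  "lead \<mu> i = card {r. r < length \<mu> \<and> i < \<mu> ! r}"

definition ps :: "(nat \<Rightarrow> nat) \<Rightarrow> nat \<Rightarrow> nat" where
  "ps \<beta> t = (\<Sum>i<t. \<beta> i)"

definition Dn :: "nat \<Rightarrow> (nat \<Rightarrow> nat) set" where
  "Dn n = {\<beta>. (\<forall>i j. i \<le> j \<longrightarrow> \<beta> j \<le> \<beta> i) \<and> (\<forall>i\<ge>n. \<beta> i = 0) \<and> ps \<beta> n = n}"

definition rk :: "nat \<Rightarrow> (nat \<Rightarrow> nat) \<Rightarrow> nat" where
  "rk n \<beta> = (\<Sum>t\<le>n. ps \<beta> t)"

definition Es :: "nat list \<Rightarrow> (nat \<Rightarrow> nat) \<Rightarrow> (nat \<Rightarrow> nat set) set" where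
  "Es \<mu> \<alpha> = {S :: nat \<Rightarrow> nat set.
      (\<forall>r < length \<mu>. finite (S r) \<and> card (S r) = \<mu> ! r) \<and>
      (\<forall>r. length \<mu> \<le> r \<longrightarrow> S r = {}) \<and>
      (\<forall>i. card {r. r < length \<mu> \<and> i \<in> S r} = \<alpha> i)}"

lemma e_mono_Es: "e_mono \<mu> \<alpha> = card (Es \<mu> \<alpha>)"
  unfolding e_mono_def Es_def ..

lemma part_nth_mono:
  assumes "\<mu> \<in> partitions n" "r \<le> r'" "r' < length \<mu>"
  shows "\<mu> ! r' \<le> \<mu> ! r"
proof (cases "r = r'")
  case False
  then have "r < r'" using assms by simp
  with assms show ?thesis unfolding partitions_def
    by (auto simp: sorted_wrt_iff_nth_less)
qed simp

lemma part_pos: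
  assumes "\<mu> \<in> partitions n" "r < length \<mu>"
  shows "0 < \<mu> ! r"
  using assms nth_mem unfolding partitions_def by blast

lemma part_le:
  assumes "\<mu> \<in> partitions n" "r < length \<mu>"
  shows "\<mu> ! r \<le> n"
proof -
  have "\<mu> ! r \<le> sum_list \<mu>" by (rule elem_le_sum_list[OF assms(2)])
  with assms(1) show ?thesis by (simp add: partitions_def)
qed

lemma part_sum:
  assumes "\<mu> \<in> partitions n"
  shows "(\<Sum>r<length \<mu>. \<mu> ! r) = n"
  using assms unfolding partitions_def by (simp add: sum_list_sum_nth atLeast0LessThan)

lemma part_len:
  assumes "\<mu> \<in> partitions n"
  shows "length \<mu> \<le> n"
proof -
  have "(\<Sum>r<length \<mu>. (1::nat)) \<le> (\<Sum>r<length \<mu>. \<mu> ! r)"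
    using part_pos[OF assms] by (intro sum_mono) (simp add: Suc_leI)
  then show ?thesis using part_sum[OF assms] by simp
qed

lemma finite_partitions: "finite (partitions n)"
proof -
  have "partitions n \<subseteq> {xs. set xs \<subseteq> {..n} \<and> length xs \<le> n}"
  proof
    fix xs assume a: "xs \<in> partitions n"
    have "set xs \<subseteq> {..n}"
    proof
      fix x assume "x \<in> set xs"
      then have "x \<le> sum_list xs" by (rule member_le_sum_list) simp_all
      then show "x \<in> {..n}" using a by (simp add: partitions_def)
    qed
    then show "xs \<in> {xs. set xs \<subseteq> {..n} \<and> length xs \<le> n}"
      using part_len[OF a] by simp
  qed
  then show ?thesis by (rule finite_subset) (rule finite_lists_length_le, simp)
qed

lemma lead_iff:
  assumes "\<mu> \<in> partitions n" "r < length \<mu>"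
  shows "r < lead \<mu> i \<longleftrightarrow> i < \<mu> ! r"
proof -
  let ?A = "{r. r < length \<mu> \<and> i < \<mu> ! r}"
  have "r \<in> ?A \<longleftrightarrow> r < card ?A"
  proof (rule downclosed_eq)
    show "finite ?A" by simp
    fix x y assume "x \<in> ?A" "y \<le> x"
    then show "y \<in> ?A" using part_nth_mono[OF assms(1), of y x] by auto
  qed
  then have "r \<in> ?A \<longleftrightarrow> r < lead \<mu> i" unfolding lead_def .
  then show ?thesis using assms by simp
qed

lemma lead_len:
  assumes "\<mu> \<in> partitions n"
  shows "lead \<mu> 0 = length \<mu>"
proof -
  have "{r. r < length \<mu> \<and> 0 < \<mu> ! r} = {..<length \<mu>}" using part_pos[OF assms] by auto
  then show ?thesis unfolding lead_def by simp
qed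

lemma lead_nth:
  assumes "\<mu> \<in> partitions n" "r < length \<mu>"
  shows "\<mu> ! r = card {i. r < lead \<mu> i}"
proof -
  have "{i. r < lead \<mu> i} = {..<\<mu> ! r}" using lead_iff[OF assms] by auto
  then show ?thesis by simp
qed

lemma lead_inj:
  assumes "\<mu> \<in> partitions n" "\<mu>' \<in> partitions n" "lead \<mu> = lead \<mu>'"
  shows "\<mu> = \<mu>'"
proof (rule nth_equalityI)
  show l: "length \<mu> = length \<mu>'" using lead_len assms by metis
  fix r assume "r < length \<mu>"
  then show "\<mu> ! r = \<mu>' ! r" using lead_nth assms l by metis
qed

lemma lead_D:
  assumes "\<mu> \<in> partitions n"
  shows "lead \<mu> \<in> Dn n"
proof -
  have mono: "lead \<mu> j \<le> lead \<mu> i" if "i \<le> j" for i j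
    unfolding lead_def using that by (intro card_mono) auto
  have zero: "lead \<mu> i = 0" if "i \<ge> n" for i
    unfolding lead_def using that part_le[OF assms] by (auto simp: card_eq_0_iff) (meson le_trans not_le)
  have "ps (lead \<mu>) n = (\<Sum>i\<in>{..<n}. card {r\<in>{..<length \<mu>}. i < \<mu> ! r})"
    unfolding ps_def lead_def by simp
  also have "\<dots> = (\<Sum>r\<in>{..<length \<mu>}. card {i\<in>{..<n}. i < \<mu> ! r})"
    by (rule count_swap) auto
  also have "\<dots> = (\<Sum>r<length \<mu>. \<mu> ! r)"
  proof (rule sum.cong)
    fix r assume "r \<in> {..<length \<mu>}"
    then have "{i\<in>{..<n}. i < \<mu> ! r} = {..<\<mu> ! r}" using part_le[OF assms, of r] by auto
    then show "card {i\<in>{..<n}. i < \<mu> ! r} = \<mu> ! r" by simp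
  qed simp
  also have "\<dots> = n" by (rule part_sum[OF assms])
  finally show ?thesis unfolding Dn_def using mono zero by auto
qed

lemma D_zero: "\<beta> \<in> Dn n \<Longrightarrow> n \<le> i \<Longrightarrow> \<beta> i = 0" unfolding Dn_def by auto
lemma D_mono: "\<beta> \<in> Dn n \<Longrightarrow> i \<le> j \<Longrightarrow> \<beta> j \<le> \<beta> i" unfolding Dn_def by auto
lemma D_ps: "\<beta> \<in> Dn n \<Longrightarrow> ps \<beta> n = n" unfolding Dn_def by auto

lemma lead_surj:
  assumes "\<nu> \<in> Dn n"
  shows "\<exists>\<mu>\<in>partitions n. lead \<mu> = \<nu>"
proof -
  define f where "f r = card {i. r < \<nu> i}" for r
  define \<mu> where "\<mu> = map f [0..<\<nu> 0]"
  have sub: "{i. r < \<nu> i} \<subseteq> {..<n}" for r using D_zero[OF assms] by auto (metis not_le not_less0)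
  have fin: "finite {i. r < \<nu> i}" for r using sub finite_subset by blast
  have iff: "i \<in> {i. r < \<nu> i} \<longleftrightarrow> i < f r" for r i unfolding f_def
  proof (rule downclosed_eq[OF fin])
    fix x y assume "x \<in> {i. r < \<nu> i}" "y \<le> x"
    then show "y \<in> {i. r < \<nu> i}" using D_mono[OF assms, of y x] by auto
  qed
  then have iff: "i < f r \<longleftrightarrow> r < \<nu> i" for i r by simp
  have len: "length \<mu> = \<nu> 0" unfolding \<mu>_def by simp
  have nth: "r < \<nu> 0 \<Longrightarrow> \<mu> ! r = f r" for r unfolding \<mu>_def by simp
  have fmono: "r \<le> r' \<Longrightarrow> f r' \<le> f r" for r r' unfolding f_def
    by (intro card_mono fin) auto
  have "sorted_wrt (\<ge>) \<mu>"
    unfolding sorted_wrt_iff_nth_less using len nth fmono by auto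
  moreover have "\<forall>x\<in>set \<mu>. 0 < x"
  proof
    fix x assume "x \<in> set \<mu>"
    then obtain r where "r < \<nu> 0" "x = f r" unfolding \<mu>_def by auto
    then show "0 < x" using iff[of 0 r] by simp
  qed
  moreover have "sum_list \<mu> = n"
  proof -
    have "sum_list \<mu> = (\<Sum>r<\<nu> 0. f r)" unfolding \<mu>_def
      by (simp add: sum_list_sum_nth atLeast0LessThan)
    also have "\<dots> = (\<Sum>r\<in>{..<\<nu> 0}. card {i\<in>{..<n}. r < \<nu> i})"
      unfolding f_def using sub by (intro sum.cong) (auto intro!: arg_cong[where f=card])
    also have "\<dots> = (\<Sum>i\<in>{..<n}. card {r\<in>{..<\<nu> 0}. r < \<nu> i})"
      by (rule count_swap[symmetric]) auto
    also have "\<dots> = (\<Sum>i<n. \<nu> i)"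
    proof (rule sum.cong)
      fix i assume "i \<in> {..<n}"
      have "{r\<in>{..<\<nu> 0}. r < \<nu> i} = {..<\<nu> i}" using D_mono[OF assms, of 0 i] by auto
      then show "card {r\<in>{..<\<nu> 0}. r < \<nu> i} = \<nu> i" by simp
    qed simp
    also have "\<dots> = n" using D_ps[OF assms] unfolding ps_def .
    finally show ?thesis .
  qed
  ultimately have P: "\<mu> \<in> partitions n" unfolding partitions_def by simp
  have "lead \<mu> i = \<nu> i" for i
  proof -
    have "{r. r < length \<mu> \<and> i < \<mu> ! r} = {..<\<nu> i}"
      using len nth iff D_mono[OF assms, of 0 i] by auto
    then show ?thesis unfolding lead_def by simp
  qed
  then show ?thesis using P by blast
qed

lemma Es_ps:
  assumes "S \<in> Es \<mu> \<alpha>"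
  shows "ps \<alpha> t = (\<Sum>r<length \<mu>. card (S r \<inter> {..<t}))"
proof -
  have "ps \<alpha> t = (\<Sum>i\<in>{..<t}. card {r\<in>{..<length \<mu>}. i \<in> S r})"
    using assms unfolding ps_def Es_def by simp
  also have "\<dots> = (\<Sum>r\<in>{..<length \<mu>}. card {i\<in>{..<t}. i \<in> S r})"
    by (rule count_swap) auto
  also have "\<dots> = (\<Sum>r<length \<mu>. card (S r \<inter> {..<t}))"
    by (intro sum.cong arg_cong[where f=card]) auto
  finally show ?thesis .
qed

lemma lead_ps:
  assumes "\<mu> \<in> partitions n"
  shows "ps (lead \<mu>) t = (\<Sum>r<length \<mu>. min (\<mu> ! r) t)"
proof -
  have "ps (lead \<mu>) t = (\<Sum>i\<in>{..<t}. card {r\<in>{..<length \<mu>}. i < \<mu> ! r})"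
    unfolding ps_def lead_def by simp
  also have "\<dots> = (\<Sum>r\<in>{..<length \<mu>}. card {i\<in>{..<t}. i < \<mu> ! r})"
    by (rule count_swap) auto
  also have "\<dots> = (\<Sum>r<length \<mu>. min (\<mu> ! r) t)"
  proof (rule sum.cong)
    fix r
    have "{i\<in>{..<t}. i < \<mu> ! r} = {..<min (\<mu> ! r) t}" by auto
    then show "card {i\<in>{..<t}. i < \<mu> ! r} = min (\<mu> ! r) t" by simp
  qed simp
  finally show ?thesis .
qed

lemma Es_dom:
  assumes "\<mu> \<in> partitions n" "S \<in> Es \<mu> \<alpha>"
  shows "ps \<alpha> t \<le> ps (lead \<mu>) t"
  unfolding Es_ps[OF assms(2)] lead_ps[OF assms(1)]
proof (rule sum_mono)
  fix r assume r: "r \<in> {..<length \<mu>}"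
  have "card (S r \<inter> {..<t}) \<le> card (S r)" using assms(2) r unfolding Es_def
    by (intro card_mono) auto
  moreover have "card (S r \<inter> {..<t}) \<le> card {..<t}" by (intro card_mono) auto
  ultimately show "card (S r \<inter> {..<t}) \<le> min (\<mu> ! r) t"
    using assms(2) r unfolding Es_def by auto
qed

lemma Es_total:
  assumes "\<mu> \<in> partitions n" "S \<in> Es \<mu> \<alpha>"
  shows "\<exists>M. \<forall>t\<ge>M. ps \<alpha> t = n"
proof -
  have "finite (\<Union>r<length \<mu>. S r)" using assms(2) unfolding Es_def by auto
  then obtain M where M: "(\<Union>r<length \<mu>. S r) \<subseteq> {..<M}" unfolding finite_nat_set_iff_bounded by blast
  have "ps \<alpha> t = n" if "t \<ge> M" for t
  proof -
    have "ps \<alpha> t = (\<Sum>r<length \<mu>. card (S r))"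
      unfolding Es_ps[OF assms(2)] using M that
      by (intro sum.cong arg_cong[where f=card]) auto
    also have "\<dots> = (\<Sum>r<length \<mu>. \<mu> ! r)" using assms(2) unfolding Es_def by simp
    finally show ?thesis using part_sum[OF assms(1)] by simp
  qed
  then show ?thesis by blast
qed

lemma ps_Suc: "ps \<beta> (Suc t) = ps \<beta> t + \<beta> t" unfolding ps_def by simp

lemma dom_D:
  assumes mono: "\<And>i j. i \<le> j \<Longrightarrow> \<beta> j \<le> \<beta> i"
    and le: "\<And>t. ps \<beta> t \<le> n" and tot: "\<And>t. t \<ge> M \<Longrightarrow> ps \<beta> t = n"
  shows "\<beta> \<in> Dn n"
proof -
  have bn: "\<beta> n = 0"
  proof (rule ccontr)
    assume "\<beta> n \<noteq> 0"
    then have "\<beta> i \<ge> 1" if "i \<le> n" for i using mono[OF that] by simp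
    then have "(\<Sum>i<Suc n. (1::nat)) \<le> ps \<beta> (Suc n)" unfolding ps_def by (intro sum_mono) auto
    then show False using le[of "Suc n"] by simp
  qed
  have z: "\<beta> i = 0" if "i \<ge> n" for i using mono[OF that] bn by simp
  have "ps \<beta> (n + k) = ps \<beta> n" for k by (induction k) (auto simp: ps_Suc z)
  then have "ps \<beta> n = n" using tot[of "n + M"] by simp
  then show ?thesis unfolding Dn_def using mono z by auto
qed

lemma rank_lt:
  assumes "\<beta> \<in> Dn n" "\<gamma> \<in> Dn n" "\<And>t. ps \<beta> t \<le> ps \<gamma> t" "\<beta> \<noteq> \<gamma>"
  shows "rk n \<beta> < rk n \<gamma>"
proof -
  obtain i where i: "\<beta> i \<noteq> \<gamma> i" using assms(4) by auto
  then have "i < n" by (metis D_zero[OF assms(1)] D_zero[OF assms(2)] not_less)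
  have "\<exists>t\<in>{..n}. ps \<beta> t < ps \<gamma> t"
  proof (rule ccontr)
    assume "\<not> ?thesis"
    then have "ps \<beta> t = ps \<gamma> t" if "t \<le> n" for t using assms(3)[of t] that by (simp add: not_less le_antisym)
    then have "ps \<beta> (Suc i) = ps \<gamma> (Suc i)" "ps \<beta> i = ps \<gamma> i" using \<open>i < n\<close> by auto
    then show False using i by (simp add: ps_Suc)
  qed
  then show ?thesis unfolding rk_def using assms(3) by (intro sum_strict_mono_ex1) auto
qed

lemma Es_lead:
  assumes "\<mu> \<in> partitions n"
  shows "Es \<mu> (lead \<mu>) = {\<lambda>r. if r < length \<mu> then {..<\<mu> ! r} else {}}"
proof (intro equalityI subsetI)
  fix S assume S: "S \<in> Es \<mu> (lead \<mu>)"
  have eq: "card (S r \<inter> {..<t}) = min (\<mu> ! r) t" if "r < length \<mu>" for r t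
  proof -
    have "ps (lead \<mu>) t = ps (lead \<mu>) t" ..
    have le: "card (S r \<inter> {..<t}) \<le> min (\<mu> ! r) t" if "r \<in> {..<length \<mu>}" for r
    proof -
      have "card (S r \<inter> {..<t}) \<le> card (S r)" using S that unfolding Es_def
        by (intro card_mono) auto
      moreover have "card (S r \<inter> {..<t}) \<le> card {..<t}" by (intro card_mono) auto
      ultimately show ?thesis using S that unfolding Es_def by auto
    qed
    have "(\<Sum>r<length \<mu>. card (S r \<inter> {..<t})) = (\<Sum>r<length \<mu>. min (\<mu> ! r) t)"
      using Es_ps[OF S, of t] lead_ps[OF assms, of t] by simp
    from sum_mono_inv[OF this le] that show ?thesis by simp
  qed
  show "S \<in> {\<lambda>r. if r < length \<mu> then {..<\<mu> ! r} else {}}"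
  proof -
    have "S r = (if r < length \<mu> then {..<\<mu> ! r} else {})" for r
    proof (cases "r < length \<mu>")
      case True
      have fin: "finite (S r)" "card (S r) = \<mu> ! r" using S True unfolding Es_def by auto
      have "card (S r \<inter> {..<\<mu> ! r}) = card (S r)" using eq[OF True, of "\<mu> ! r"] fin by simp
      then have "S r \<inter> {..<\<mu> ! r} = S r" using fin by (intro card_subset_eq) auto
      then have "S r \<subseteq> {..<\<mu> ! r}" by blast
      then have "S r = {..<\<mu> ! r}" using fin by (intro card_subset_eq) auto
      then show ?thesis using True by simp
    next
      case False then show ?thesis using S unfolding Es_def by auto
    qed
    then show ?thesis by auto
  qed
next
  fix S assume "S \<in> {\<lambda>r. if r < length \<mu> then {..<\<mu> ! r} else {}}"
  then show "S \<in> Es \<mu> (lead \<mu>)" unfolding Es_def lead_def by (auto intro!: arg_cong[where f=card])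
qed

lemma emono_diag: "\<mu> \<in> partitions n \<Longrightarrow> e_mono \<mu> (lead \<mu>) = 1"
  by (simp add: e_mono_Es Es_lead)

lemma emono_tri:
  assumes "\<mu> \<in> partitions n" "\<mu>2 \<in> partitions n" "e_mono \<mu>2 (lead \<mu>) \<noteq> 0"
  shows "\<mu>2 = \<mu> \<or> rk n (lead \<mu>) < rk n (lead \<mu>2)"
proof -
  have "Es \<mu>2 (lead \<mu>) \<noteq> {}" using assms(3) unfolding e_mono_Es by (metis card.empty)
  then obtain S where S: "S \<in> Es \<mu>2 (lead \<mu>)" by blast
  show ?thesis
  proof (cases "lead \<mu> = lead \<mu>2")
    case True then show ?thesis using lead_inj[OF assms(1) assms(2) True] by simp
  next
    case False
    show ?thesis using rank_lt[OF lead_D[OF assms(1)] lead_D[OF assms(2)] Es_dom[OF assms(2) S] False]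
      by simp
  qed
qed



lemma Es_le:
  assumes "\<mu> \<in> partitions n" "S \<in> Es \<mu> \<alpha>"
  shows "ps \<alpha> t \<le> n"
proof -
  have "ps \<alpha> t = (\<Sum>r<length \<mu>. card (S r \<inter> {..<t}))" by (rule Es_ps[OF assms(2)])
  also have "\<dots> \<le> (\<Sum>r<length \<mu>. card (S r))"
    using assms(2) unfolding Es_def by (intro sum_mono card_mono) auto
  also have "\<dots> = (\<Sum>r<length \<mu>. \<mu> ! r)" using assms(2) unfolding Es_def by simp
  also have "\<dots> = n" by (rule part_sum[OF assms(1)])
  finally show ?thesis .
qed

lemma tri_uniq:
  fixes c :: "'a \<Rightarrow> 'a \<Rightarrow> int" and k :: "'a \<Rightarrow> nat"
  assumes fin: "finite P"
    and diag: "\<And>\<mu>. \<mu> \<in> P \<Longrightarrow> c \<mu> \<mu> = 1"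
    and tri: "\<And>\<mu> \<mu>2. \<mu> \<in> P \<Longrightarrow> \<mu>2 \<in> P \<Longrightarrow> c \<mu>2 \<mu> \<noteq> 0 \<Longrightarrow> \<mu>2 = \<mu> \<or> k \<mu> < k \<mu>2"
    and eq: "\<And>\<mu>. \<mu> \<in> P \<Longrightarrow> (\<Sum>\<mu>2\<in>P. d \<mu>2 * c \<mu>2 \<mu>) = 0"
  shows "\<forall>\<mu>\<in>P. d \<mu> = 0"
proof (rule ccontr)
  assume nt: "\<not> (\<forall>\<mu>\<in>P. d \<mu> = 0)"
  define Q where "Q = {\<mu>\<in>P. d \<mu> \<noteq> 0}"
  have Qne: "Q \<noteq> {}" and Qfin: "finite Q" using nt fin unfolding Q_def by auto
  define m where "m = Max (k ` Q)"
  have "m \<in> k ` Q" unfolding m_def using Qne Qfin by simp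
  then obtain \<mu>0 where \<mu>0: "\<mu>0 \<in> Q" "k \<mu>0 = m" by auto
  have maxk: "\<mu> \<in> Q \<Longrightarrow> k \<mu> \<le> m" for \<mu> unfolding m_def using Qfin by simp
  have P0: "\<mu>0 \<in> P" using \<mu>0 unfolding Q_def by simp
  have "(\<Sum>\<mu>2\<in>P. d \<mu>2 * c \<mu>2 \<mu>0) = d \<mu>0 * c \<mu>0 \<mu>0 + (\<Sum>\<mu>2\<in>P - {\<mu>0}. d \<mu>2 * c \<mu>2 \<mu>0)"
    using fin P0 by (simp add: sum.remove)
  also have "(\<Sum>\<mu>2\<in>P - {\<mu>0}. d \<mu>2 * c \<mu>2 \<mu>0) = 0"
  proof (rule sum.neutral, rule ballI)
    fix \<mu>2 assume a: "\<mu>2 \<in> P - {\<mu>0}"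
    show "d \<mu>2 * c \<mu>2 \<mu>0 = 0"
    proof (rule ccontr)
      assume "d \<mu>2 * c \<mu>2 \<mu>0 \<noteq> 0"
      then have "d \<mu>2 \<noteq> 0" "c \<mu>2 \<mu>0 \<noteq> 0" by auto
      then have "k \<mu>0 < k \<mu>2" "\<mu>2 \<in> Q" using tri[OF P0, of \<mu>2] a unfolding Q_def by auto
      then show False using maxk \<mu>0 by fastforce
    qed
  qed
  finally have "d \<mu>0 = 0" using eq[OF P0] diag[OF P0] by simp
  then show False using \<mu>0 unfolding Q_def by simp
qed

lemma tri_exist:
  fixes c :: "'a \<Rightarrow> 'a \<Rightarrow> int" and k :: "'a \<Rightarrow> nat"
  assumes fin: "finite P"
    and diag: "\<And>\<mu>. \<mu> \<in> P \<Longrightarrow> c \<mu> \<mu> = 1"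
    and tri: "\<And>\<mu> \<mu>2. \<mu> \<in> P \<Longrightarrow> \<mu>2 \<in> P \<Longrightarrow> c \<mu>2 \<mu> \<noteq> 0 \<Longrightarrow> \<mu>2 = \<mu> \<or> k \<mu> < k \<mu>2"
  shows "\<exists>d. \<forall>\<mu>\<in>P. (\<Sum>\<mu>2\<in>P. d \<mu>2 * c \<mu>2 \<mu>) = g \<mu>"
proof -
  have main: "\<forall>g. (\<forall>\<mu>\<in>P. g \<mu> \<noteq> 0 \<longrightarrow> k \<mu> < m) \<longrightarrow> (\<exists>d. \<forall>\<mu>\<in>P. (\<Sum>\<mu>2\<in>P. d \<mu>2 * c \<mu>2 \<mu>) = g \<mu>)" for m
  proof (induction m)
    case 0
    show ?case by (intro allI impI exI[of _ "\<lambda>_. 0"]) auto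
  next
    case (Suc m)
    show ?case
    proof (intro allI impI)
      fix g :: "'a \<Rightarrow> int" assume supp: "\<forall>\<mu>\<in>P. g \<mu> \<noteq> 0 \<longrightarrow> k \<mu> < Suc m"
      define b where "b \<mu>2 = (if k \<mu>2 = m then g \<mu>2 else 0)" for \<mu>2
      define g' where "g' \<mu> = g \<mu> - (\<Sum>\<mu>2\<in>P. b \<mu>2 * c \<mu>2 \<mu>)" for \<mu>
      have "\<forall>\<mu>\<in>P. g' \<mu> \<noteq> 0 \<longrightarrow> k \<mu> < m"
      proof (intro ballI impI)
        fix \<mu> assume P: "\<mu> \<in> P" and nz: "g' \<mu> \<noteq> 0"
        show "k \<mu> < m"
        proof (rule ccontr)
          assume "\<not> k \<mu> < m"
          then have km: "k \<mu> \<ge> m" by simp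
          have "(\<Sum>\<mu>2\<in>P. b \<mu>2 * c \<mu>2 \<mu>) = b \<mu> * c \<mu> \<mu> + (\<Sum>\<mu>2\<in>P - {\<mu>}. b \<mu>2 * c \<mu>2 \<mu>)"
            using fin P by (simp add: sum.remove)
          also have "(\<Sum>\<mu>2\<in>P - {\<mu>}. b \<mu>2 * c \<mu>2 \<mu>) = 0"
          proof (rule sum.neutral, rule ballI)
            fix \<mu>2 assume a: "\<mu>2 \<in> P - {\<mu>}"
            show "b \<mu>2 * c \<mu>2 \<mu> = 0"
            proof (rule ccontr)
              assume "b \<mu>2 * c \<mu>2 \<mu> \<noteq> 0"
              then have "k \<mu>2 = m" "c \<mu>2 \<mu> \<noteq> 0" unfolding b_def by (auto split: if_splits)
              then show False using tri[OF P, of \<mu>2] a km by auto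
            qed
          qed
          finally have "(\<Sum>\<mu>2\<in>P. b \<mu>2 * c \<mu>2 \<mu>) = b \<mu>" using diag[OF P] by simp
          then have "g' \<mu> = g \<mu> - b \<mu>" unfolding g'_def by simp
          moreover have "g \<mu> = b \<mu>"
            using supp P km unfolding b_def by (cases "k \<mu> = m") auto
          ultimately show False using nz by simp
        qed
      qed
      then obtain d' where d': "\<forall>\<mu>\<in>P. (\<Sum>\<mu>2\<in>P. d' \<mu>2 * c \<mu>2 \<mu>) = g' \<mu>" using Suc.IH by blast
      have "\<forall>\<mu>\<in>P. (\<Sum>\<mu>2\<in>P. (d' \<mu>2 + b \<mu>2) * c \<mu>2 \<mu>) = g \<mu>"
        using d' by (simp add: distrib_right sum.distrib g'_def)
      then show "\<exists>d. \<forall>\<mu>\<in>P. (\<Sum>\<mu>2\<in>P. d \<mu>2 * c \<mu>2 \<mu>) = g \<mu>"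
        by (intro exI[of _ "\<lambda>\<mu>2. d' \<mu>2 + b \<mu>2"])
    qed
  qed
  have "\<forall>\<mu>\<in>P. g \<mu> \<noteq> 0 \<longrightarrow> k \<mu> < Suc (Max (k ` P))"
    using fin by (simp add: le_imp_less_Suc)
  then show ?thesis using main by blast
qed

lemma sort_perm:
  fixes \<alpha> :: "nat \<Rightarrow> nat"
  assumes "finite {i. \<alpha> i \<noteq> (0::nat)}"
  shows "\<exists>\<sigma>::nat\<Rightarrow>nat. bij \<sigma> \<and> (\<forall>i j. i \<le> j \<longrightarrow> \<alpha> (\<sigma> j) \<le> \<alpha> (\<sigma> i))"
proof -
  obtain M where M: "\<And>i. \<alpha> i \<noteq> 0 \<Longrightarrow> i < M" using assms unfolding finite_nat_set_iff_bounded by auto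
  define ys where "ys = map \<alpha> [0..<M]"
  define xs where "xs = rev (sort ys)"
  have "mset xs = mset ys" unfolding xs_def by simp
  then obtain p where p: "p permutes {..<length ys}" "permute_list p ys = xs"
    by (rule mset_eq_permutation)
  have ly: "length ys = M" unfolding ys_def by simp
  have lx: "length xs = M" unfolding xs_def using ly by simp
  have sx: "sorted_wrt (\<ge>) xs" unfolding xs_def by (simp add: sorted_wrt_rev)
  have val: "\<alpha> (p i) = (if i < M then xs ! i else 0)" for i
  proof (cases "i < M")
    case True
    have e: "xs ! i = ys ! p i" unfolding p(2)[symmetric] using permute_list_nth[OF p(1)] True ly by simp
    have "p i \<in> {..<length ys}" using permutes_in_image[OF p(1)] True ly by simp
    then have "p i < M" using ly by simp
    then have "ys ! p i = \<alpha> (p i)" unfolding ys_def by simp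
    then show ?thesis using True e by simp
  next
    case False
    then have "p i = i" using permutes_not_in[OF p(1)] ly by simp
    moreover have "\<alpha> i = 0" using M[of i] False by (cases "\<alpha> i = 0") auto
    ultimately show ?thesis using False by simp
  qed
  have "\<alpha> (p j) \<le> \<alpha> (p i)" if "i \<le> j" for i j
  proof (cases "j < M")
    case True
    then have "i < M" using that by simp
    have "xs ! j \<le> xs ! i"
    proof (cases "i = j")
      case False
      then have "i < j" using that by simp
      then show ?thesis using sx True lx unfolding sorted_wrt_iff_nth_less by simp
    qed simp
    then show ?thesis using val[of i] val[of j] True \<open>i < M\<close> by simp
  next
    case False then show ?thesis using val[of j] by simp
  qed
  moreover have "bij p" using p(1) by (rule permutes_bij)
  ultimately have "bij p \<and> (\<forall>i j. i \<le> j \<longrightarrow> \<alpha> (p j) \<le> \<alpha> (p i))" by simp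
  then show ?thesis by (rule exI[of _ p])
qed

lemma EsI:
  assumes "\<And>r. r < length \<mu> \<Longrightarrow> finite (S r)" "\<And>r. r < length \<mu> \<Longrightarrow> card (S r) = \<mu> ! r"
    "\<And>r. length \<mu> \<le> r \<Longrightarrow> S r = {}" "\<And>i. card {r. r < length \<mu> \<and> i \<in> S r} = \<alpha> i"
  shows "S \<in> Es \<mu> \<alpha>"
  using assms unfolding Es_def by blast

lemma EsD:
  assumes "S \<in> Es \<mu> \<alpha>"
  shows "\<And>r. r < length \<mu> \<Longrightarrow> finite (S r)" "\<And>r. r < length \<mu> \<Longrightarrow> card (S r) = \<mu> ! r"
    "\<And>r. length \<mu> \<le> r \<Longrightarrow> S r = {}" "\<And>i. card {r. r < length \<mu> \<and> i \<in> S r} = \<alpha> i"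
  using assms unfolding Es_def by blast+

lemma Es_vimage:
  fixes \<sigma> :: "nat \<Rightarrow> nat"
  assumes "bij \<sigma>" "S \<in> Es \<mu> \<alpha>"
  shows "(\<lambda>r. \<sigma> -` S r) \<in> Es \<mu> (\<alpha> \<circ> \<sigma>)"
proof -
  have e: "\<And>X. \<sigma> -` X = inv \<sigma> ` X" using bij_vimage_eq_inv_image[OF assms(1)] by blast
  have "inj (inv \<sigma>)" using bij_imp_bij_inv[OF assms(1)] bij_is_inj by blast
  then have i: "\<And>X. inj_on (inv \<sigma>) X" using inj_on_subset subset_UNIV by blast
  show ?thesis
  proof (rule EsI)
    fix r assume r: "r < length \<mu>"
    show "finite (\<sigma> -` S r)" unfolding e using finite_image_iff[OF i] EsD(1)[OF assms(2) r] by simp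
    show "card (\<sigma> -` S r) = \<mu> ! r" unfolding e using card_image[OF i] EsD(2)[OF assms(2) r] by simp
  next
    fix r assume "length \<mu> \<le> r" then show "\<sigma> -` S r = {}" using EsD(3)[OF assms(2)] by simp
  next
    fix i show "card {r. r < length \<mu> \<and> i \<in> \<sigma> -` S r} = (\<alpha> \<circ> \<sigma>) i"
      using EsD(4)[OF assms(2), of "\<sigma> i"] by simp
  qed
qed

lemma emono_sym:
  assumes "bij \<sigma>"
  shows "e_mono \<mu> (\<alpha> \<circ> \<sigma>) = e_mono \<mu> \<alpha>"
proof -
  define \<tau> where "\<tau> = inv \<sigma>"
  have bt: "bij \<tau>" unfolding \<tau>_def using assms by (simp add: bij_imp_bij_inv)
  have st: "\<sigma> (\<tau> x) = x" "\<tau> (\<sigma> x) = x" for x unfolding \<tau>_def using assms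
    by (auto simp: bij_def surj_f_inv_f inv_f_f)
  have ac: "\<alpha> \<circ> \<sigma> \<circ> \<tau> = \<alpha>" using st by (simp add: fun_eq_iff)
  have "bij_betw (\<lambda>S r. \<sigma> -` S r) (Es \<mu> \<alpha>) (Es \<mu> (\<alpha> \<circ> \<sigma>))"
  proof (rule bij_betw_byWitness[where f'="\<lambda>S r. \<tau> -` S r"])
    show "\<forall>S\<in>Es \<mu> \<alpha>. (\<lambda>r. \<tau> -` (\<sigma> -` S r)) = S" using st by (auto simp: fun_eq_iff)
    show "\<forall>S\<in>Es \<mu> (\<alpha> \<circ> \<sigma>). (\<lambda>r. \<sigma> -` (\<tau> -` S r)) = S" using st by (auto simp: fun_eq_iff)
    show "(\<lambda>S r. \<sigma> -` S r) ` Es \<mu> \<alpha> \<subseteq> Es \<mu> (\<alpha> \<circ> \<sigma>)"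
      using Es_vimage[OF assms] by blast
    show "(\<lambda>S r. \<tau> -` S r) ` Es \<mu> (\<alpha> \<circ> \<sigma>) \<subseteq> Es \<mu> \<alpha>"
      using Es_vimage[OF bt, of _ \<mu> "\<alpha> \<circ> \<sigma>"] unfolding ac by blast
  qed
  then show ?thesis unfolding e_mono_Es by (rule sym[OF bij_betw_same_card])
qed

definition Xs :: "'a set \<Rightarrow> ('a \<Rightarrow> 'a \<Rightarrow> bool) \<Rightarrow> (nat \<Rightarrow> nat) \<Rightarrow> ('a \<Rightarrow> nat) set" where
  "Xs V E \<alpha> = {\<kappa> \<in> proper_colorings V E. \<forall>i. card {v \<in> V. \<kappa> v = i} = \<alpha> i}"

lemma X_coeff_Xs: "X_coeff V E \<alpha> = card (Xs V E \<alpha>)"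
  unfolding X_coeff_def Xs_def ..

lemma X_sym:
  assumes "bij \<sigma>"
  shows "X_coeff V E (\<alpha> \<circ> \<sigma>) = X_coeff V E \<alpha>"
proof -
  define \<tau> where "\<tau> = inv \<sigma>"
  have st: "\<sigma> (\<tau> x) = x" "\<tau> (\<sigma> x) = x" for x unfolding \<tau>_def using assms
    by (auto simp: bij_def surj_f_inv_f inv_f_f)
  have "bij_betw (\<lambda>\<kappa> v. if v \<in> V then \<tau> (\<kappa> v) else undefined) (Xs V E \<alpha>) (Xs V E (\<alpha> \<circ> \<sigma>))"
  proof (rule bij_betw_byWitness[where f'="\<lambda>\<kappa> v. if v \<in> V then \<sigma> (\<kappa> v) else undefined"])
    show "\<forall>\<kappa>\<in>Xs V E \<alpha>. (\<lambda>v. if v \<in> V then \<sigma> (if v \<in> V then \<tau> (\<kappa> v) else undefined) else undefined) = \<kappa>"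
      using st unfolding Xs_def proper_colorings_def by (auto simp: fun_eq_iff PiE_def extensional_def)
    show "\<forall>\<kappa>\<in>Xs V E (\<alpha> \<circ> \<sigma>). (\<lambda>v. if v \<in> V then \<tau> (if v \<in> V then \<sigma> (\<kappa> v) else undefined) else undefined) = \<kappa>"
      using st unfolding Xs_def proper_colorings_def by (auto simp: fun_eq_iff PiE_def extensional_def)
    show "(\<lambda>\<kappa> v. if v \<in> V then \<tau> (\<kappa> v) else undefined) ` Xs V E \<alpha> \<subseteq> Xs V E (\<alpha> \<circ> \<sigma>)"
    proof
      fix \<kappa>' assume "\<kappa>' \<in> (\<lambda>\<kappa> v. if v \<in> V then \<tau> (\<kappa> v) else undefined) ` Xs V E \<alpha>"
      then obtain \<kappa> where k: "\<kappa> \<in> Xs V E \<alpha>" "\<kappa>' = (\<lambda>v. if v \<in> V then \<tau> (\<kappa> v) else undefined)" by auto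
      have "card {v \<in> V. \<kappa>' v = i} = \<alpha> (\<sigma> i)" for i
      proof -
        have "{v \<in> V. \<kappa>' v = i} = {v \<in> V. \<kappa> v = \<sigma> i}" using k(2) st by auto
        then show ?thesis using k(1) unfolding Xs_def by simp
      qed
      moreover have "\<kappa>' \<in> proper_colorings V E"
        using k st unfolding Xs_def proper_colorings_def by auto (metis st(1))
      ultimately show "\<kappa>' \<in> Xs V E (\<alpha> \<circ> \<sigma>)" unfolding Xs_def by simp
    qed
    show "(\<lambda>\<kappa> v. if v \<in> V then \<sigma> (\<kappa> v) else undefined) ` Xs V E (\<alpha> \<circ> \<sigma>) \<subseteq> Xs V E \<alpha>"
    proof
      fix \<kappa>' assume "\<kappa>' \<in> (\<lambda>\<kappa> v. if v \<in> V then \<sigma> (\<kappa> v) else undefined) ` Xs V E (\<alpha> \<circ> \<sigma>)"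
      then obtain \<kappa> where k: "\<kappa> \<in> Xs V E (\<alpha> \<circ> \<sigma>)" "\<kappa>' = (\<lambda>v. if v \<in> V then \<sigma> (\<kappa> v) else undefined)" by auto
      have "card {v \<in> V. \<kappa>' v = i} = \<alpha> i" for i
      proof -
        have "{v \<in> V. \<kappa>' v = i} = {v \<in> V. \<kappa> v = \<tau> i}" using k(2) st by auto
        then show ?thesis using k(1) st unfolding Xs_def by simp
      qed
      moreover have "\<kappa>' \<in> proper_colorings V E"
        using k st unfolding Xs_def proper_colorings_def by auto (metis st(2))
      ultimately show "\<kappa>' \<in> Xs V E \<alpha>" unfolding Xs_def by simp
    qed
  qed
  then show ?thesis unfolding X_coeff_Xs by (metis bij_betw_same_card)
qed

lemma X_total:
  assumes "finite V" "X_coeff V E \<beta> \<noteq> 0"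
  shows "(\<forall>t. ps \<beta> t \<le> card V) \<and> (\<exists>M. \<forall>t\<ge>M. ps \<beta> t = card V)"
proof -
  have "Xs V E \<beta> \<noteq> {}" using assms(2) unfolding X_coeff_Xs by (metis card.empty)
  then obtain \<kappa> where k: "\<kappa> \<in> Xs V E \<beta>" by blast
  have pst: "ps \<beta> t = card {v\<in>V. \<kappa> v < t}" for t
  proof -
    have "ps \<beta> t = (\<Sum>i\<in>{..<t}. card {v \<in> {v\<in>V. \<kappa> v < t}. \<kappa> v = i})"
      unfolding ps_def
    proof (rule sum.cong)
      fix i assume "i \<in> {..<t}"
      then have "{v \<in> {v\<in>V. \<kappa> v < t}. \<kappa> v = i} = {v\<in>V. \<kappa> v = i}" by auto
      then show "\<beta> i = card {v \<in> {v\<in>V. \<kappa> v < t}. \<kappa> v = i}" using k unfolding Xs_def by simp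
    qed simp
    also have "\<dots> = card {v\<in>V. \<kappa> v < t}"
      using sum.group[of "{v\<in>V. \<kappa> v < t}" "{..<t}" \<kappa> "\<lambda>_. 1::nat"] assms(1) by auto
    finally show ?thesis .
  qed
  have "ps \<beta> t \<le> card V" for t unfolding pst using assms(1) by (intro card_mono) auto
  moreover obtain M where "\<forall>v\<in>V. \<kappa> v < M"
    using assms(1) finite_nat_set_iff_bounded[of "\<kappa> ` V"] by auto
  then have "\<forall>t\<ge>M. ps \<beta> t = card V" unfolding pst
    by (auto intro!: arg_cong[where f=card])
  ultimately show ?thesis by blast
qed

lemma expansion_unique_exists:
  assumes "finite V"
  shows "\<exists>!a. e_expansion V E a"
proof -
  define n where "n = card V"
  define P where "P = partitions n"
  define c where "c \<mu>2 \<mu> = int (e_mono \<mu>2 (lead \<mu>))" for \<mu>2 \<mu>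
  define k where "k \<mu> = rk n (lead \<mu>)" for \<mu>
  have fin: "finite P" unfolding P_def by (rule finite_partitions)
  have diag: "\<And>\<mu>. \<mu> \<in> P \<Longrightarrow> c \<mu> \<mu> = 1" unfolding c_def P_def using emono_diag by simp
  have tri: "\<And>\<mu> \<mu>2. \<mu> \<in> P \<Longrightarrow> \<mu>2 \<in> P \<Longrightarrow> c \<mu>2 \<mu> \<noteq> 0 \<Longrightarrow> \<mu>2 = \<mu> \<or> k \<mu> < k \<mu>2"
    unfolding c_def P_def k_def using emono_tri by simp
  have "\<exists>d. \<forall>\<mu>\<in>P. (\<Sum>\<mu>2\<in>P. d \<mu>2 * c \<mu>2 \<mu>) = int (X_coeff V E (lead \<mu>))"
  proof (rule tri_exist[where k=k])
    show "finite P" by (rule fin)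
    show "\<And>\<mu>. \<mu> \<in> P \<Longrightarrow> c \<mu> \<mu> = 1" by (rule diag)
    show "\<And>\<mu> \<mu>2. \<mu> \<in> P \<Longrightarrow> \<mu>2 \<in> P \<Longrightarrow> c \<mu>2 \<mu> \<noteq> 0 \<Longrightarrow> \<mu>2 = \<mu> \<or> k \<mu> < k \<mu>2"
      by (rule tri)
  qed
  then obtain d where d: "\<forall>\<mu>\<in>P. (\<Sum>\<mu>2\<in>P. d \<mu>2 * c \<mu>2 \<mu>) = int (X_coeff V E (lead \<mu>))"
    by (elim exE)
  define a where "a \<mu> = (if \<mu> \<in> P then d \<mu> else 0)" for \<mu>
  have ea: "e_expansion V E a"
    unfolding e_expansion_def
  proof (intro conjI allI impI)
    fix \<mu> assume "\<mu> \<notin> partitions (card V)" then show "a \<mu> = 0" unfolding a_def P_def n_def by simp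
  next
    fix \<alpha> :: "nat \<Rightarrow> nat" assume "finite {i. \<alpha> i \<noteq> 0}"
    from sort_perm[OF this] obtain \<sigma> :: "nat \<Rightarrow> nat" where
      \<sigma>: "bij \<sigma>" "\<forall>i j. i \<le> j \<longrightarrow> \<alpha> (\<sigma> j) \<le> \<alpha> (\<sigma> i)"
      by (elim exE conjE)
    define \<beta> where "\<beta> = \<alpha> \<circ> \<sigma>"
    have mono: "\<And>i j. i \<le> j \<Longrightarrow> \<beta> j \<le> \<beta> i" unfolding \<beta>_def using \<sigma>(2) by simp
    have "int (X_coeff V E \<beta>) = (\<Sum>\<mu>\<in>P. a \<mu> * int (e_mono \<mu> \<beta>))"
    proof (cases "\<beta> \<in> Dn n")
      case True
      from lead_surj[OF True] obtain \<mu>0 where \<mu>0: "\<mu>0 \<in> P" "lead \<mu>0 = \<beta>" unfolding P_def by (elim bexE)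
      have "(\<Sum>\<mu>\<in>P. a \<mu> * int (e_mono \<mu> \<beta>)) = (\<Sum>\<mu>\<in>P. d \<mu> * c \<mu> \<mu>0)"
        by (rule sum.cong) (simp_all add: a_def c_def \<mu>0(2))
      then show ?thesis using d \<mu>0 by simp
    next
      case False
      have x0: "X_coeff V E \<beta> = 0"
      proof (rule ccontr)
        assume "X_coeff V E \<beta> \<noteq> 0"
        from X_total[OF assms this] have h1: "\<forall>t. ps \<beta> t \<le> n" and "\<exists>M. \<forall>t\<ge>M. ps \<beta> t = n"
          unfolding n_def by simp_all
        then obtain M where h2: "\<forall>t\<ge>M. ps \<beta> t = n" by (elim exE)
        have "\<beta> \<in> Dn n"
        proof (rule dom_D[OF mono])
          fix t show "ps \<beta> t \<le> n" using h1 by simp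
        next
          fix t assume "t \<ge> M" then show "ps \<beta> t = n" using h2 by simp
        qed
        then show False using False by simp
      qed
      have "e_mono \<mu> \<beta> = 0" if "\<mu> \<in> P" for \<mu>
      proof (rule ccontr)
        assume "e_mono \<mu> \<beta> \<noteq> 0"
        then have "Es \<mu> \<beta> \<noteq> {}" unfolding e_mono_Es by (metis card.empty)
        then obtain S where S: "S \<in> Es \<mu> \<beta>" by auto
        have \<mu>P: "\<mu> \<in> partitions n" using that unfolding P_def .
        obtain M where h2: "\<forall>t\<ge>M. ps \<beta> t = n" using Es_total[OF \<mu>P S] by (elim exE)
        have "\<beta> \<in> Dn n"
        proof (rule dom_D[OF mono])
          fix t show "ps \<beta> t \<le> n" using Es_le[OF \<mu>P S] .
        next
          fix t assume "t \<ge> M" then show "ps \<beta> t = n" using h2 by simp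
        qed
        then show False using False by simp
      qed
      then show ?thesis using x0 by simp
    qed
    then show "int (X_coeff V E \<alpha>) = (\<Sum>\<mu>\<in>partitions (card V). a \<mu> * int (e_mono \<mu> \<alpha>))"
      unfolding \<beta>_def X_sym[OF \<sigma>(1)] emono_sym[OF \<sigma>(1)] P_def n_def .
  qed
  have uq: "b = a" if "e_expansion V E b" for b
  proof -
    have "\<forall>\<mu>\<in>P. b \<mu> - a \<mu> = 0"
    proof (rule tri_uniq[where k=k and c=c])
      show "finite P" by (rule fin)
      show "\<And>\<mu>. \<mu> \<in> P \<Longrightarrow> c \<mu> \<mu> = 1" by (rule diag)
      show "\<And>\<mu> \<mu>2. \<mu> \<in> P \<Longrightarrow> \<mu>2 \<in> P \<Longrightarrow> c \<mu>2 \<mu> \<noteq> 0 \<Longrightarrow> \<mu>2 = \<mu> \<or> k \<mu> < k \<mu>2"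
        by (rule tri)
      fix \<mu> assume "\<mu> \<in> P"
      have "{i. lead \<mu> i \<noteq> 0} \<subseteq> {..<n}"
      proof
        fix i assume "i \<in> {i. lead \<mu> i \<noteq> 0}"
        then show "i \<in> {..<n}" using D_zero[OF lead_D[of \<mu> n]] \<open>\<mu> \<in> P\<close> unfolding P_def
          by (cases "i < n") auto
      qed
      then have fs: "finite {i. lead \<mu> i \<noteq> 0}" by (rule finite_subset) simp
      have "\<forall>\<alpha>. finite {i. \<alpha> i \<noteq> 0} \<longrightarrow> int (X_coeff V E \<alpha>) = (\<Sum>\<mu>\<in>partitions (card V). b \<mu> * int (e_mono \<mu> \<alpha>))"
        using that unfolding e_expansion_def by (rule conjunct2)
      then have "int (X_coeff V E (lead \<mu>)) = (\<Sum>\<mu>2\<in>P. b \<mu>2 * c \<mu>2 \<mu>)"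
        using fs unfolding c_def P_def n_def by simp
      moreover have "\<forall>\<alpha>. finite {i. \<alpha> i \<noteq> 0} \<longrightarrow> int (X_coeff V E \<alpha>) = (\<Sum>\<mu>\<in>partitions (card V). a \<mu> * int (e_mono \<mu> \<alpha>))"
        using ea unfolding e_expansion_def by (rule conjunct2)
      then have "int (X_coeff V E (lead \<mu>)) = (\<Sum>\<mu>2\<in>P. a \<mu>2 * c \<mu>2 \<mu>)"
        using fs unfolding c_def P_def n_def by simp
      ultimately show "(\<Sum>\<mu>2\<in>P. (b \<mu>2 - a \<mu>2) * c \<mu>2 \<mu>) = 0"
        by (simp add: left_diff_distrib sum_subtractf)
    qed
    show "b = a"
    proof (rule ext)
      fix \<mu> show "b \<mu> = a \<mu>"
      proof (cases "\<mu> \<in> P")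
        case True then show ?thesis using \<open>\<forall>\<mu>\<in>P. b \<mu> - a \<mu> = 0\<close> by simp
      next
        case False then show ?thesis using that ea
          unfolding e_expansion_def P_def n_def by simp
      qed
    qed
  qed
  show ?thesis by (rule ex1I[of _ a]) (rule ea, rule uq)
qed



definition al :: "nat \<Rightarrow> nat \<Rightarrow> nat \<Rightarrow> nat" where
  "al n a = (\<lambda>i. if i = 0 then a else if i = 1 then n - a else 0)"

lemma pow01: "{A. A \<subseteq> {0::nat,1}} = {{},{0},{1},{0,1}}"
proof (intro equalityI subsetI)
  fix A :: "nat set" assume "A \<in> {A. A \<subseteq> {0::nat,1}}"
  then have s: "A \<subseteq> {0,1}" by simp
  show "A \<in> {{},{0},{1},{0,1}}"
  proof (cases "0 \<in> A")
    case True
    show ?thesis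
    proof (cases "1 \<in> A")
      case True
      then have "A = {0,1}" using s \<open>0 \<in> A\<close> by auto
      then show ?thesis by simp
    next
      case False
      then have "A = {0}" using s \<open>0 \<in> A\<close> by auto
      then show ?thesis by simp
    qed
  next
    case False
    show ?thesis
    proof (cases "1 \<in> A")
      case True
      then have "A = {1}" using s \<open>0 \<notin> A\<close> by auto
      then show ?thesis by simp
    next
      case False
      then have "A = {}" using s \<open>0 \<notin> A\<close> by auto
      then show ?thesis by simp
    qed
  qed
qed auto

lemma factor_sum:
  "(\<Sum>A\<in>{A. A \<subseteq> {0::nat,1} \<and> card A = m}. (if 1 \<in> A then -1 else 1 :: int)) =
     (if m = 0 then 1 else if m = 2 then -1 else 0)"
proof -
  have "(\<Sum>A\<in>{A. A \<subseteq> {0::nat,1} \<and> card A = m}. (if 1 \<in> A then -1 else 1 :: int)) =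
      (\<Sum>A\<in>{A. A \<subseteq> {0::nat,1}}. if card A = m then (if 1 \<in> A then -1 else 1 :: int) else 0)"
    by (subst sum.inter_filter[symmetric]) (auto simp: pow01 intro: arg_cong2[where f=sum])
  also have "\<dots> = (if m = 0 then 1 else if m = 2 then -1 else 0)"
    unfolding pow01 by simp
  finally show ?thesis .
qed

lemma e_functional:
  assumes P: "\<mu> \<in> partitions n" and nk: "n = 2 * k"
  shows "(\<Sum>a\<le>n. (-1::int) ^ (k + (n - a)) * int (e_mono \<mu> (al n a))) =
           (if \<mu> = replicate k 2 then 1 else 0)"
proof -
  define L where "L = length \<mu>"
  define T where "T = {S :: nat \<Rightarrow> nat set. (\<forall>r<L. finite (S r) \<and> card (S r) = \<mu> ! r) \<and>
      (\<forall>r. L \<le> r \<longrightarrow> S r = {}) \<and> (\<forall>r. S r \<subseteq> {0,1})}"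
  define g where "g S = card {r. r < L \<and> 0 \<in> S r}" for S :: "nat \<Rightarrow> nat set"
  define w where "w a = (-1::int) ^ (k + (n - a))" for a
  have Ln: "L \<le> n" unfolding L_def by (rule part_len[OF P])
  have cnt: "g S + card {r. r < L \<and> 1 \<in> S r} = n" if S: "S \<in> T" for S
  proof -
    have "n = (\<Sum>r<L. card (S r))" using S part_sum[OF P] unfolding T_def L_def by simp
    also have "\<dots> = (\<Sum>r\<in>{..<L}. card {i\<in>{0::nat,1}. i \<in> S r})"
    proof (rule sum.cong)
      fix r have "S r \<subseteq> {0,1}" using S unfolding T_def by simp
      then have "{i\<in>{0::nat,1}. i \<in> S r} = S r" by auto
      then show "card (S r) = card {i\<in>{0::nat,1}. i \<in> S r}" by simp
    qed simp
    also have "\<dots> = (\<Sum>i\<in>{0::nat,1}. card {r\<in>{..<L}. i \<in> S r})"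
      by (rule count_swap[symmetric]) auto
    also have "\<dots> = g S + card {r. r < L \<and> 1 \<in> S r}" unfolding g_def by simp
    finally show ?thesis by simp
  qed
  have Es_eq: "Es \<mu> (al n a) = {S\<in>T. g S = a}" if "a \<le> n" for a
  proof (intro equalityI subsetI)
    fix S assume S: "S \<in> Es \<mu> (al n a)"
    have sub: "S r \<subseteq> {0,1}" for r
    proof
      fix x assume x: "x \<in> S r"
      show "x \<in> {0,1}"
      proof (rule ccontr)
        assume nx: "x \<notin> {0,1}"
        have r: "r < L" using x EsD(3)[OF S, of r] unfolding L_def by (cases "r < length \<mu>") auto
        have "card {r. r < length \<mu> \<and> x \<in> S r} = 0" using EsD(4)[OF S, of x] nx unfolding al_def by simp
        moreover have "r \<in> {r. r < length \<mu> \<and> x \<in> S r}" using r x unfolding L_def by simp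
        ultimately show False by (auto simp: card_eq_0_iff)
      qed
    qed
    have "S \<in> T" unfolding T_def L_def using EsD(1,2,3)[OF S] sub by auto
    moreover have "g S = a" unfolding g_def L_def using EsD(4)[OF S, of 0] unfolding al_def by simp
    ultimately show "S \<in> {S\<in>T. g S = a}" by simp
  next
    fix S assume S: "S \<in> {S\<in>T. g S = a}"
    then have ST: "S \<in> T" and ga: "g S = a" by auto
    show "S \<in> Es \<mu> (al n a)"
    proof (rule EsI)
      fix r assume "r < length \<mu>"
      then show "finite (S r)" "card (S r) = \<mu> ! r" using ST unfolding T_def L_def by auto
    next
      fix r assume "length \<mu> \<le> r" then show "S r = {}" using ST unfolding T_def L_def by auto
    next
      fix i
      show "card {r. r < length \<mu> \<and> i \<in> S r} = al n a i"
      proof (cases "i = 0")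
        case True then show ?thesis using ga unfolding g_def al_def L_def by simp
      next
        case False
        show ?thesis
        proof (cases "i = 1")
          case True
          then show ?thesis using cnt[OF ST] ga False unfolding al_def L_def by simp
        next
          case False
          then have "{r. r < length \<mu> \<and> i \<in> S r} = {}" using ST \<open>i \<noteq> 0\<close> unfolding T_def by auto
          then show ?thesis using False \<open>i \<noteq> 0\<close> unfolding al_def by simp
        qed
      qed
    qed
  qed
  define C where "C r = {A. A \<subseteq> {0::nat,1} \<and> card A = \<mu> ! r}" for r
  have bij: "bij_betw (\<lambda>S. restrict S {..<L}) T (PiE {..<L} C)"
  proof (rule bij_betw_byWitness[where f'="\<lambda>f r. if r < L then f r else {}"])
    show "\<forall>S\<in>T. (\<lambda>r. if r < L then restrict S {..<L} r else {}) = S"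
      unfolding T_def by (auto simp: fun_eq_iff)
    show "\<forall>f\<in>PiE {..<L} C. restrict (\<lambda>r. if r < L then f r else {}) {..<L} = f"
      by (auto simp: fun_eq_iff PiE_def extensional_def)
    show "(\<lambda>S. restrict S {..<L}) ` T \<subseteq> PiE {..<L} C"
    proof (rule image_subsetI)
      fix S assume ST: "S \<in> T"
      have "\<forall>r\<in>{..<L}. S r \<in> C r"
      proof
        fix r assume "r \<in> {..<L}"
        then have "card (S r) = \<mu> ! r" "S r \<subseteq> {0,1}" using ST unfolding T_def by auto
        then show "S r \<in> C r" unfolding C_def by simp
      qed
      then show "restrict S {..<L} \<in> PiE {..<L} C" by (simp add: restrict_PiE_iff)
    qed
    show "(\<lambda>f r. if r < L then f r else {}) ` PiE {..<L} C \<subseteq> T"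
    proof (rule image_subsetI)
      fix f assume f: "f \<in> PiE {..<L} C"
      have fr: "f r \<subseteq> {0,1} \<and> card (f r) = \<mu> ! r" if "r < L" for r
        using PiE_mem[OF f, of r] that unfolding C_def by simp
      show "(\<lambda>r. if r < L then f r else {}) \<in> T" unfolding T_def
      proof (intro CollectI conjI allI impI)
        fix r assume "r < L"
        then show "finite (if r < L then f r else {})" "card (if r < L then f r else {}) = \<mu> ! r"
          using fr[of r] finite_subset[of "f r" "{0,1}"] by auto
      next
        fix r assume "L \<le> r" then show "(if r < L then f r else {}) = {}" by simp
      next
        fix r show "(if r < L then f r else {}) \<subseteq> {0,1}" using fr[of r] by auto
      qed
    qed
  qed
  have finT: "finite T"
  proof -
    have "finite (PiE {..<L} C)" unfolding C_def by (intro finite_PiE) auto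
    then show ?thesis using bij_betw_finite[OF bij] by simp
  qed
  have gle: "g S \<le> n" for S
  proof -
    have "g S \<le> card {..<L}" unfolding g_def by (intro card_mono) auto
    then show ?thesis using Ln by simp
  qed
  have "(\<Sum>a\<le>n. w a * int (e_mono \<mu> (al n a))) = (\<Sum>a\<in>{..n}. \<Sum>S\<in>{S\<in>T. g S = a}. w (g S))"
    by (intro sum.cong) (simp_all add: e_mono_Es Es_eq)
  also have "\<dots> = (\<Sum>S\<in>T. w (g S))"
    using sum.group[of T "{..n}" g "\<lambda>S. w (g S)"] finT gle by auto
  also have "\<dots> = (\<Sum>S\<in>T. (-1)^k * (\<Prod>r<L. (if 1 \<in> S r then -1 else 1)))"
  proof (rule sum.cong)
    fix S assume ST: "S \<in> T"
    have "n - g S = card {r. r < L \<and> 1 \<in> S r}" using cnt[OF ST] by simp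
    moreover have "(\<Prod>r<L. (if 1 \<in> S r then -1 else 1::int)) = (-1) ^ card {r. r < L \<and> 1 \<in> S r}"
      by (simp add: prod.If_cases Int_def)
    ultimately show "w (g S) = (-1)^k * (\<Prod>r<L. (if 1 \<in> S r then -1 else 1))"
      unfolding w_def by (simp add: power_add)
  qed simp
  also have "\<dots> = (-1)^k * (\<Sum>S\<in>T. (\<Prod>r<L. (if 1 \<in> S r then -1 else 1)))"
    by (simp add: sum_distrib_left)
  also have "(\<Sum>S\<in>T. (\<Prod>r<L. (if 1 \<in> S r then -1 else 1::int))) =
      (\<Sum>f\<in>PiE {..<L} C. (\<Prod>r<L. (if 1 \<in> f r then -1 else 1)))"
  proof -
    have "(\<Sum>S\<in>T. (\<Prod>r<L. (if 1 \<in> S r then -1 else 1::int))) =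
        (\<Sum>S\<in>T. (\<Prod>r<L. (if 1 \<in> restrict S {..<L} r then -1 else 1::int)))"
      by (intro sum.cong prod.cong) auto
    also have "\<dots> = (\<Sum>f\<in>PiE {..<L} C. (\<Prod>r<L. (if 1 \<in> f r then -1 else 1)))"
      by (rule sum.reindex_bij_betw[OF bij])
    finally show ?thesis .
  qed
  also have "\<dots> = (\<Prod>r<L. \<Sum>A\<in>C r. (if 1 \<in> A then -1 else 1))"
    by (rule prod_sum_PiE[symmetric]) (auto simp: C_def intro: finite_subset)
  also have "\<dots> = (\<Prod>r<L. (if \<mu> ! r = 2 then -1 else 0))"
  proof (rule prod.cong)
    fix r assume "r \<in> {..<L}"
    then have "\<mu> ! r \<noteq> 0" using part_pos[OF P, of r] unfolding L_def by simp
    then show "(\<Sum>A\<in>C r. (if 1 \<in> A then -1 else 1::int)) = (if \<mu> ! r = 2 then -1 else 0)"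
      unfolding C_def factor_sum by simp
  qed simp
  finally have main: "(\<Sum>a\<le>n. w a * int (e_mono \<mu> (al n a))) = (-1)^k * (\<Prod>r<L. (if \<mu> ! r = 2 then -1 else 0::int))" .
  show ?thesis
  proof (cases "\<forall>r<L. \<mu> ! r = 2")
    case True
    then have "(\<Sum>r<L. \<mu> ! r) = L * 2" by simp
    then have "L = k" using part_sum[OF P] nk unfolding L_def by simp
    then have rep: "\<mu> = replicate k 2" using True unfolding L_def by (intro nth_equalityI) auto
    have "(\<Prod>r<L. (if \<mu> ! r = 2 then -1 else 0::int)) = (-1)^L" using True by simp
    then show ?thesis using main \<open>L = k\<close> rep unfolding w_def by (simp add: power_add[symmetric])
  next
    case False
    then obtain r where r: "r < L" "\<mu> ! r \<noteq> 2" by auto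
    then have "(\<Prod>r<L. (if \<mu> ! r = 2 then -1 else 0::int)) = 0"
      by (intro prod_zero) auto
    moreover have "\<mu> \<noteq> replicate k 2" using r unfolding L_def by auto
    ultimately show ?thesis using main unfolding w_def by simp
  qed
qed



definition Lg :: "nat list \<Rightarrow> (nat \<times> nat) set" where
  "Lg lam = (\<lambda>(i,t). (Suc i, t)) ` (SIGMA i:{..<length lam}. {1..lam ! i})"

lemma V_eq: "spider_V lam = insert (0,0) (Lg lam)"
  unfolding spider_V_def Lg_def by auto

lemma finite_V: "finite (spider_V lam)"
  unfolding V_eq Lg_def by auto

lemma sum_V:
  "(\<Sum>v\<in>spider_V lam. f v) = f (0,0) + (\<Sum>i<length lam. \<Sum>t\<in>{1..lam ! i}. f (Suc i, t))"
proof -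
  have nin: "(0,0) \<notin> Lg lam" unfolding Lg_def by auto
  have fin: "finite (Lg lam)" unfolding Lg_def by auto
  have inj: "inj_on (\<lambda>(i,t). (Suc i, t)) (SIGMA i:{..<length lam}. {1..lam ! i})"
    by (auto simp: inj_on_def)
  have "(\<Sum>v\<in>spider_V lam. f v) = f (0,0) + (\<Sum>v\<in>Lg lam. f v)"
    unfolding V_eq using nin fin by simp
  also have "(\<Sum>v\<in>Lg lam. f v) = (\<Sum>p\<in>(SIGMA i:{..<length lam}. {1..lam ! i}). f (Suc (fst p), snd p))"
    unfolding Lg_def by (subst sum.reindex[OF inj]) (auto intro!: sum.cong)
  also have "\<dots> = (\<Sum>(i,t)\<in>(SIGMA i:{..<length lam}. {1..lam ! i}). f (Suc i, t))"
    by (simp add: split_def)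
  also have "\<dots> = (\<Sum>i<length lam. \<Sum>t\<in>{1..lam ! i}. f (Suc i, t))"
    by (rule sum.Sigma[symmetric]) auto
  finally show ?thesis .
qed

lemma card_V: "card (spider_V lam) = 1 + sum_list lam"
proof -
  have "card (spider_V lam) = (\<Sum>v\<in>spider_V lam. 1)" by simp
  also have "\<dots> = 1 + (\<Sum>i<length lam. lam ! i)" unfolding sum_V by simp
  also have "\<dots> = 1 + sum_list lam" by (simp add: sum_list_sum_nth atLeast0LessThan)
  finally show ?thesis .
qed

lemma mem_V: "v \<in> spider_V lam \<longleftrightarrow> v = (0,0) \<or> (\<exists>i t. v = (Suc i, t) \<and> i < length lam \<and> 1 \<le> t \<and> t \<le> lam ! i)"
  unfolding spider_V_def by auto

definition kap :: "nat list \<Rightarrow> nat \<Rightarrow> nat \<times> nat \<Rightarrow> nat" where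
  "kap lam c = (\<lambda>v. if v \<in> spider_V lam then (c + snd v) mod 2 else undefined)"

lemma adj_snd: "spider_E lam u v \<Longrightarrow> snd v = Suc (snd u) \<or> snd u = Suc (snd v)"
  unfolding spider_E_def spider_adj_def by auto

lemma kap_proper: "kap lam c \<in> proper_colorings (spider_V lam) (spider_E lam)"
  unfolding proper_colorings_def
proof (intro CollectI conjI ballI impI)
  show "kap lam c \<in> spider_V lam \<rightarrow>\<^sub>E UNIV" unfolding kap_def by auto
next
  fix v w assume v: "v \<in> spider_V lam" and w: "w \<in> spider_V lam" and e: "spider_E lam v w"
  from adj_snd[OF e] show "kap lam c v \<noteq> kap lam c w" unfolding kap_def using v w by (auto; presburger)
qed

lemma proper01:
  assumes k: "\<kappa> \<in> proper_colorings (spider_V lam) (spider_E lam)"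
    and b: "\<And>v. v \<in> spider_V lam \<Longrightarrow> \<kappa> v \<le> 1"
  shows "\<kappa> = kap lam (\<kappa> (0,0))"
proof -
  define c where "c = \<kappa> (0,0)"
  have V0: "(0,0) \<in> spider_V lam" unfolding spider_V_def by simp
  have c1: "c \<le> 1" using b[OF V0] unfolding c_def .
  have exten: "\<kappa> \<in> spider_V lam \<rightarrow>\<^sub>E UNIV" using k unfolding proper_colorings_def by simp
  have pr: "\<And>v w. v \<in> spider_V lam \<Longrightarrow> w \<in> spider_V lam \<Longrightarrow> spider_E lam v w \<Longrightarrow> \<kappa> v \<noteq> \<kappa> w"
    using k unfolding proper_colorings_def by blast
  have flip: "\<kappa> w = (x + 1) mod 2" if "v \<in> spider_V lam" "w \<in> spider_V lam" "spider_E lam v w" "\<kappa> v = x mod 2" for v w x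
  proof -
    have "\<kappa> w \<noteq> \<kappa> v" using pr[OF that(1,2,3)] by simp
    moreover have "\<kappa> w \<le> 1" using b[OF that(2)] .
    ultimately show ?thesis using that(4) by presburger
  qed
  have leg: "\<kappa> (Suc i, t) = (c + t) mod 2" if "i < length lam" "1 \<le> t" "t \<le> lam ! i" for i t
    using that(2,3)
  proof (induction t rule: dec_induct)
    case base
    have m: "(Suc i, 1) \<in> spider_V lam" using that(1,3) \<open>1 \<le> t\<close> unfolding spider_V_def by auto
    have "spider_E lam (0,0) (Suc i, 1)" unfolding spider_E_def spider_adj_def using V0 m that(1) by auto
    moreover have "\<kappa> (0,0) = c mod 2" using c1 unfolding c_def by simp
    ultimately show ?case using flip[OF V0 m] by simp
  next
    case (step t)
    have m1: "(Suc i, t) \<in> spider_V lam" using that(1) step by (auto simp: mem_V)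
    have m2: "(Suc i, Suc t) \<in> spider_V lam" using that(1) step by (auto simp: mem_V)
    have "spider_E lam (Suc i, t) (Suc i, Suc t)" unfolding spider_E_def spider_adj_def using m1 m2 by auto
    moreover have "\<kappa> (Suc i, t) = (c + t) mod 2" using step by simp
    ultimately have "\<kappa> (Suc i, Suc t) = (c + t + 1) mod 2" using flip[OF m1 m2] by simp
    then show ?case by simp
  qed
  show ?thesis
  proof (rule ext)
    fix v show "\<kappa> v = kap lam (\<kappa> (0, 0)) v"
    proof (cases "v \<in> spider_V lam")
      case False then show ?thesis using PiE_arb[OF exten False] unfolding kap_def by simp
    next
      case True
      then consider "v = (0,0)" | i t where "v = (Suc i, t)" "i < length lam" "1 \<le> t" "t \<le> lam ! i"
        unfolding mem_V by blast
      then show ?thesis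
      proof cases
        case 1 then show ?thesis using c1 V0 unfolding kap_def c_def by auto
      next
        case 2 then show ?thesis using leg[OF 2(2-4)] True unfolding kap_def c_def by simp
      qed
    qed
  qed
qed

lemma odd_count: "(\<Sum>t\<in>{1..m}. (if t mod 2 = 1 then 1 else 0 :: nat)) = (m + 1) div 2"
proof (induction m)
  case 0 then show ?case by simp
next
  case (Suc m)
  have "{1..Suc m} = insert (Suc m) {1..m}" by auto
  then have "(\<Sum>t\<in>{1..Suc m}. (if t mod 2 = 1 then 1 else 0 :: nat)) =
      (if Suc m mod 2 = 1 then 1 else 0) + (\<Sum>t\<in>{1..m}. (if t mod 2 = 1 then 1 else 0))" by simp
  then show ?case using Suc by presburger
qed

lemma half_sum: "2 * sum_list (map (\<lambda>x. (x + 1) div 2) lam) = sum_list lam + length (filter odd lam)"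
proof (induction lam)
  case (Cons a lam)
  have "2 * ((a + 1) div 2) = a + (if odd a then 1 else 0)" by presburger
  then show ?case using Cons by simp
qed simp

definition hh :: "nat list \<Rightarrow> nat" where "hh lam = sum_list (map (\<lambda>x. (x + 1) div 2) lam)"

lemma count_kap01: "card {v \<in> spider_V lam. kap lam 0 v = 1} = hh lam"
proof -
  have "card {v \<in> spider_V lam. kap lam 0 v = 1} = (\<Sum>v\<in>spider_V lam. if kap lam 0 v = 1 then 1 else 0)"
    using finite_V by (rule card_filter_sum)
  also have "\<dots> = (\<Sum>i<length lam. \<Sum>t\<in>{1..lam ! i}. if t mod 2 = 1 then 1 else 0)"
    unfolding sum_V
  proof -
    have "(0,0) \<in> spider_V lam" by (simp add: mem_V)
    then have z: "(if kap lam 0 (0,0) = 1 then 1 else 0 :: nat) = 0" unfolding kap_def by simp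
    have "(\<Sum>i<length lam. \<Sum>t\<in>{1..lam ! i}. if kap lam 0 (Suc i, t) = 1 then 1 else 0) =
        (\<Sum>i<length lam. \<Sum>t\<in>{1..lam ! i}. if t mod 2 = 1 then 1 else (0::nat))"
    proof (intro sum.cong refl)
      fix i t assume "i \<in> {..<length lam}" "t \<in> {1..lam ! i}"
      then have "(Suc i, t) \<in> spider_V lam" by (auto simp: mem_V)
      then show "(if kap lam 0 (Suc i, t) = 1 then 1 else 0) = (if t mod 2 = 1 then 1 else (0::nat))"
        unfolding kap_def by simp
    qed
    then show "(if kap lam 0 (0,0) = 1 then 1 else 0) +
        (\<Sum>i<length lam. \<Sum>t\<in>{1..lam ! i}. if kap lam 0 (Suc i, t) = 1 then 1 else 0) =
        (\<Sum>i<length lam. \<Sum>t\<in>{1..lam ! i}. if t mod 2 = 1 then 1 else (0::nat))" using z by simp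
  qed
  also have "\<dots> = (\<Sum>i<length lam. (lam ! i + 1) div 2)" by (simp only: odd_count)
  also have "\<dots> = hh lam" unfolding hh_def by (simp add: sum_list_sum_nth atLeast0LessThan)
  finally show ?thesis .
qed

lemma kap_vals: "v \<in> spider_V lam \<Longrightarrow> kap lam c v \<le> 1"
  unfolding kap_def by simp

lemma compl_count:
  fixes \<kappa> :: "nat \<times> nat \<Rightarrow> nat"
  assumes "\<And>v. v \<in> spider_V lam \<Longrightarrow> \<kappa> v \<le> 1"
  shows "card {v \<in> spider_V lam. \<kappa> v = 0} = card (spider_V lam) - card {v \<in> spider_V lam. \<kappa> v = 1}"
proof -
  have "{v \<in> spider_V lam. \<kappa> v = 0} = spider_V lam - {v \<in> spider_V lam. \<kappa> v = 1}"
  proof -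
    have d: "\<kappa> v = 0 \<or> \<kappa> v = 1" if "v \<in> spider_V lam" for v using assms[OF that] by arith
    then show ?thesis by auto
  qed
  then show ?thesis using finite_V by (simp add: card_Diff_subset)
qed

lemma count_kap10: "card {v \<in> spider_V lam. kap lam 1 v = 0} = hh lam"
proof -
  have "{v \<in> spider_V lam. kap lam 1 v = 0} = {v \<in> spider_V lam. kap lam 0 v = 1}"
    unfolding kap_def by auto presburger+
  then show ?thesis using count_kap01 by simp
qed

lemma count_kap00: "card {v \<in> spider_V lam. kap lam 0 v = 0} = card (spider_V lam) - hh lam"
  using compl_count[of lam "kap lam 0"] kap_vals count_kap01 by simp

lemma kap_ne: "kap lam 0 \<noteq> kap lam 1"
proof
  assume "kap lam 0 = kap lam 1"
  then have "kap lam 0 (0,0) = kap lam 1 (0,0)" by simp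
  then show False unfolding kap_def by (simp add: mem_V)
qed



lemma X_al:
  assumes "a \<le> card (spider_V lam)"
  shows "Xs (spider_V lam) (spider_E lam) (al (card (spider_V lam)) a) =
    {\<kappa> \<in> {kap lam 0, kap lam 1}. card {v \<in> spider_V lam. \<kappa> v = 0} = a}"
proof (intro equalityI subsetI)
  fix \<kappa> assume k: "\<kappa> \<in> Xs (spider_V lam) (spider_E lam) (al (card (spider_V lam)) a)"
  have pr: "\<kappa> \<in> proper_colorings (spider_V lam) (spider_E lam)" using k unfolding Xs_def by simp
  have cn: "\<And>i. card {v \<in> spider_V lam. \<kappa> v = i} = al (card (spider_V lam)) a i"
    using k unfolding Xs_def by simp
  have b: "\<kappa> v \<le> 1" if v: "v \<in> spider_V lam" for v
  proof (rule ccontr)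
    assume "\<not> \<kappa> v \<le> 1"
    then have "al (card (spider_V lam)) a (\<kappa> v) = 0" unfolding al_def by simp
    then have z: "card {v' \<in> spider_V lam. \<kappa> v' = \<kappa> v} = 0" using cn by simp
    have f: "finite {v' \<in> spider_V lam. \<kappa> v' = \<kappa> v}" using finite_V by simp
    have "v \<in> {v' \<in> spider_V lam. \<kappa> v' = \<kappa> v}" using v by simp
    then have "{v' \<in> spider_V lam. \<kappa> v' = \<kappa> v} \<noteq> {}" by blast
    with f have "card {v' \<in> spider_V lam. \<kappa> v' = \<kappa> v} > 0" by (simp add: card_gt_0_iff)
    with z show False by simp
  qed
  have e: "\<kappa> = kap lam (\<kappa> (0,0))" by (rule proper01[OF pr b])
  have "(0,0) \<in> spider_V lam" by (simp add: mem_V)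
  then have "\<kappa> (0,0) = 0 \<or> \<kappa> (0,0) = 1" using b by fastforce
  then have "\<kappa> \<in> {kap lam 0, kap lam 1}" using e by auto
  moreover have "card {v \<in> spider_V lam. \<kappa> v = 0} = a" using cn[of 0] unfolding al_def by simp
  ultimately show "\<kappa> \<in> {\<kappa> \<in> {kap lam 0, kap lam 1}. card {v \<in> spider_V lam. \<kappa> v = 0} = a}" by simp
next
  fix \<kappa> assume k: "\<kappa> \<in> {\<kappa> \<in> {kap lam 0, kap lam 1}. card {v \<in> spider_V lam. \<kappa> v = 0} = a}"
  then have k1: "\<kappa> \<in> {kap lam 0, kap lam 1}" and c0: "card {v \<in> spider_V lam. \<kappa> v = 0} = a" by auto
  have pr: "\<kappa> \<in> proper_colorings (spider_V lam) (spider_E lam)" using k1 kap_proper by auto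
  have vals: "\<And>v. v \<in> spider_V lam \<Longrightarrow> \<kappa> v \<le> 1" using k1 kap_vals by auto
  have c1: "card {v \<in> spider_V lam. \<kappa> v = 1} \<le> card (spider_V lam)"
    using finite_V by (intro card_mono) auto
  have "card {v \<in> spider_V lam. \<kappa> v = i} = al (card (spider_V lam)) a i" for i
  proof -
    consider "i = 0" | "i = 1" | "i \<ge> 2" by arith
    then show ?thesis
    proof cases
      case 1 then show ?thesis using c0 unfolding al_def by simp
    next
      case 2 then show ?thesis using compl_count[of lam \<kappa>, OF vals] c0 c1 unfolding al_def by simp
    next
      case 3
      then have e: "{v \<in> spider_V lam. \<kappa> v = i} = {}" using vals by fastforce
      have "card {v \<in> spider_V lam. \<kappa> v = i} = 0" by (simp only: e card.empty)
      then show ?thesis using 3 unfolding al_def by simp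
    qed
  qed
  then show "\<kappa> \<in> Xs (spider_V lam) (spider_E lam) (al (card (spider_V lam)) a)"
    unfolding Xs_def using pr by simp
qed

theorem lemma5p2:
  fixes lam :: "nat list"
  assumes "\<forall>x \<in> set lam. 0 < x"
    and "even (1 + sum_list lam)"
  shows "e_coeff (spider_V lam) (spider_E lam) (replicate ((1 + sum_list lam) div 2) 2)
           = (-1) ^ ((length (filter odd lam) - 1) div 2) * 2"
proof -
  define V where "V = spider_V lam"
  define E where "E = spider_E lam"
  define n where "n = card V"
  have n_eq: "n = 1 + sum_list lam" unfolding n_def V_def by (rule card_V)
  define k where "k = n div 2"
  have nk: "n = 2 * k" using assms(2) n_eq unfolding k_def by simp
  define P where "P = partitions n"
  define a where "a = (THE a. e_expansion V E a)"
  have ea: "e_expansion V E a" unfolding a_def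
    by (rule theI'[OF expansion_unique_exists[OF finite_V[of lam, folded V_def]]])
  have coeff: "e_coeff V E \<mu> = a \<mu>" for \<mu> unfolding e_coeff_def a_def ..
  define w where "w x = (-1::int) ^ (k + (n - x))" for x
  have exp: "int (X_coeff V E (al n x)) = (\<Sum>\<mu>\<in>P. a \<mu> * int (e_mono \<mu> (al n x)))" for x
  proof -
    have "{i. al n x i \<noteq> 0} \<subseteq> {0,1}" unfolding al_def by auto
    then have fs: "finite {i. al n x i \<noteq> 0}" by (rule finite_subset) simp
    have "\<forall>\<alpha>. finite {i. \<alpha> i \<noteq> 0} \<longrightarrow> int (X_coeff V E \<alpha>) = (\<Sum>\<mu>\<in>partitions (card V). a \<mu> * int (e_mono \<mu> \<alpha>))"
      using ea unfolding e_expansion_def by (rule conjunct2)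
    then show ?thesis using fs unfolding P_def n_def by simp
  qed
  have repP: "replicate k 2 \<in> P" unfolding P_def partitions_def using nk
    by (simp add: sorted_wrt_iff_nth_less sum_list_replicate)
  have R1: "(\<Sum>x\<le>n. w x * int (X_coeff V E (al n x))) = a (replicate k 2)"
  proof -
    have "(\<Sum>x\<le>n. w x * int (X_coeff V E (al n x))) =
        (\<Sum>x\<le>n. \<Sum>\<mu>\<in>P. a \<mu> * (w x * int (e_mono \<mu> (al n x))))"
      unfolding exp by (simp add: sum_distrib_left mult.left_commute)
    also have "\<dots> = (\<Sum>\<mu>\<in>P. \<Sum>x\<le>n. a \<mu> * (w x * int (e_mono \<mu> (al n x))))"
      by (rule sum.swap)
    also have "\<dots> = (\<Sum>\<mu>\<in>P. a \<mu> * (\<Sum>x\<le>n. w x * int (e_mono \<mu> (al n x))))"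
      by (simp add: sum_distrib_left)
    also have "\<dots> = (\<Sum>\<mu>\<in>P. a \<mu> * (if \<mu> = replicate k 2 then 1 else 0))"
    proof (rule sum.cong)
      fix \<mu> assume "\<mu> \<in> P"
      then show "a \<mu> * (\<Sum>x\<le>n. w x * int (e_mono \<mu> (al n x))) = a \<mu> * (if \<mu> = replicate k 2 then 1 else 0)"
        using e_functional[of \<mu> n k] nk unfolding w_def P_def by simp
    qed simp
    also have "\<dots> = (\<Sum>\<mu>\<in>P. if \<mu> = replicate k 2 then a \<mu> else 0)"
      by (intro sum.cong) auto
    also have "\<dots> = a (replicate k 2)"
      using repP finite_partitions[of n] unfolding P_def by (simp add: sum.delta')
    finally show ?thesis .
  qed
  define C2 where "C2 = {kap lam 0, kap lam 1}"
  define c0 where "c0 \<kappa> = card {v \<in> V. \<kappa> v = 0}" for \<kappa> :: "nat \<times> nat \<Rightarrow> nat"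
  have c0n: "c0 \<kappa> \<le> n" for \<kappa> unfolding c0_def n_def V_def using finite_V by (intro card_mono) auto
  have R2: "(\<Sum>x\<le>n. w x * int (X_coeff V E (al n x))) = w (c0 (kap lam 0)) + w (c0 (kap lam 1))"
  proof -
    have "(\<Sum>x\<le>n. w x * int (X_coeff V E (al n x))) = (\<Sum>x\<in>{..n}. \<Sum>\<kappa>\<in>{\<kappa>\<in>C2. c0 \<kappa> = x}. w (c0 \<kappa>))"
    proof (rule sum.cong)
      fix x assume "x \<in> {..n}"
      then have "X_coeff V E (al n x) = card {\<kappa>\<in>C2. c0 \<kappa> = x}"
        unfolding X_coeff_Xs V_def E_def n_def C2_def c0_def using X_al[of x lam] by (simp add: n_def V_def)
      then show "w x * int (X_coeff V E (al n x)) = (\<Sum>\<kappa>\<in>{\<kappa>\<in>C2. c0 \<kappa> = x}. w (c0 \<kappa>))"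
        by simp
    qed simp
    also have "\<dots> = (\<Sum>\<kappa>\<in>C2. w (c0 \<kappa>))"
      using sum.group[of C2 "{..n}" c0 "\<lambda>\<kappa>. w (c0 \<kappa>)"] c0n unfolding C2_def by auto
    also have "\<dots> = w (c0 (kap lam 0)) + w (c0 (kap lam 1))"
      unfolding C2_def using kap_ne[of lam] by simp
    finally show ?thesis .
  qed
  define h where "h = hh lam"
  define j where "j = length (filter odd lam)"
  have ck0: "c0 (kap lam 0) = n - h" unfolding c0_def h_def n_def V_def by (rule count_kap00)
  have ck1: "c0 (kap lam 1) = h" unfolding c0_def h_def V_def by (rule count_kap10)
  have hn: "h \<le> n" using c0n[of "kap lam 1"] ck1 by simp
  have hj: "2 * h = sum_list lam + j" unfolding h_def j_def hh_def by (rule half_sum)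
  define m where "m = (j - 1) div 2"
  have hk: "k \<le> h" using hj n_eq nk by arith
  have jj: "j = 2 * (h - k) + 1" using hj n_eq nk hk by arith
  have mm: "m = h - k" unfolding m_def jj by simp
  have e1: "k + h = 2 * k + m" using mm hk by arith
  have e2: "k + (n - h) = 2 * (k - m) + m" using mm hk hn nk by arith
  have w1: "w (c0 (kap lam 0)) = (-1) ^ m" unfolding w_def ck0
  proof -
    have "n - (n - h) = h" using hn by simp
    then show "(-1::int) ^ (k + (n - (n - h))) = (-1) ^ m" using e1 by (simp add: power_add power_mult)
  qed
  have w2: "w (c0 (kap lam 1)) = (-1) ^ m" unfolding w_def ck1 using e2 by (simp add: power_add power_mult)
  have "e_coeff V E (replicate k 2) = (-1) ^ m * 2" using R1 R2 w1 w2 coeff by simp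
  moreover have "(1 + sum_list lam) div 2 = k" using n_eq unfolding k_def by simp
  ultimately show ?thesis unfolding V_def E_def m_def j_def by simp
qed


end
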